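(* Let $f\in P_{n,2k}$ be nonnegative on $\mathbb R^n$ and suppose $f(Ax)=f(x)$ for all $A\in J(n,v)$, for some $v\in\mathbb R^n$. Then $f$ is a sum of squares of forms (of degree $k$).
   Context: $P_{n,2k}$ is the space of real forms of degree $2k$ in $n$ variables. $J(n,v)=\{A\in SO(n):Av=v\}$. *)

theory Defs
  imports "HOL-Analysis.Analysis"
begin

definition exps :: "nat \<Rightarrow> ('n::finite \<Rightarrow> nat) set" where
  "exps d = {\<alpha>. (\<Sum>i\<in>UNIV. \<alpha> i) = d}"

text \<open>A real form (homogeneous polynomial) of degree d in n = CARD('n) variables,
  viewed as a function on real^'n.  P_{n,d} is the set of such functions.\<close>
definition is_form :: "nat \<Rightarrow> (real^'n::finite \<Rightarrow> real) \<Rightarrow> bool" where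
  "is_form d f \<longleftrightarrow> (\<exists>c :: ('n \<Rightarrow> nat) \<Rightarrow> real.
      \<forall>x. f x = (\<Sum>\<alpha>\<in>exps d. c \<alpha> * (\<Prod>i\<in>UNIV. (x $ i) ^ \<alpha> i)))"

definition SO :: "(real^'n^'n::finite) set" where
  "SO = {A. orthogonal_matrix A \<and> det A = 1}"

definition J :: "real^'n::finite \<Rightarrow> (real^'n^'n) set" where
  "J v = {A \<in> SO. A *v v = v}"

end

theory Submission
  imports Defs "HOL-Complex_Analysis.Complex_Analysis"
begin


lemma poly_map_of_real: "poly (map_poly of_real p) (of_real x) = (of_real (poly p x) :: complex)"
  by (induction p) (auto simp: map_poly_pCons)

lemma mp_add: "map_poly complex_of_real (p + q) = map_poly complex_of_real p + map_poly complex_of_real q"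
  by (rule poly_eqI) (simp add: coeff_map_poly)

lemma mp_mult: "map_poly complex_of_real (p * q) = map_poly complex_of_real p * map_poly complex_of_real q"
  by (rule poly_eqI) (simp add: coeff_map_poly coeff_mult)

lemma nonneg_poly_sos:
  fixes p :: "real poly"
  assumes "\<forall>x. poly p x \<ge> 0"
  shows "\<exists>A B. (\<forall>x. poly p x = (poly A x)^2 + (poly B x)^2) \<and> 2 * degree A \<le> degree p \<and> 2 * degree B \<le> degree p"
  using assms
proof (induction "degree p" arbitrary: p rule: less_induct)
  case less
  show ?case
  proof (cases "degree p = 0")
    case True
    then obtain c where c: "p = [:c:]" by (metis degree_eq_zeroE)
    with less.prems have "c \<ge> 0" by auto
    show ?thesis
      by (rule exI[of _ "[:sqrt c:]"], rule exI[of _ 0]) (use c \<open>c \<ge> 0\<close> in auto)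
  next
    case False
    show ?thesis
    proof (cases "\<exists>r. poly p r = 0")
      case True
      then obtain r where r: "poly p r = 0" by blast
      then obtain p1 where p1: "p = [:-r,1:] * p1" using poly_eq_0_iff_dvd by (metis dvdE)
      have "poly (pderiv p) r = 0"
        using DERIV_local_min[OF poly_DERIV[of p r] zero_less_one] r less.prems by auto
      moreover have "poly (pderiv p) r = poly p1 r"
        by (simp only: p1 pderiv_mult poly_add poly_mult) (simp add: pderiv_pCons)
      ultimately have "poly p1 r = 0" by simp
      then obtain p2 where p2: "p1 = [:-r,1:] * p2" using poly_eq_0_iff_dvd by (metis dvdE)
      have pp: "p = [:-r,1:]^2 * p2" by (simp only: p1 p2 power2_eq_square mult.assoc)
      have p2ne: "p2 \<noteq> 0" using False pp by auto
      have dp: "degree p = degree p2 + 2" using pp p2ne by (simp add: degree_mult_eq degree_power_eq)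
      have nn: "poly p2 x \<ge> 0" for x
      proof (cases "x = r")
        case False
        have "0 \<le> poly p x" using less.prems by auto
        also have "\<dots> = (x - r)^2 * poly p2 x" by (subst pp) (simp add: power2_eq_square algebra_simps)
        finally show ?thesis using False
          by (simp add: zero_le_mult_iff)
      next
        case True
        have lim: "(poly p2 \<longlongrightarrow> poly p2 r) (at r)"
          using poly_isCont[of r p2] by (simp add: isCont_def)
        have ev: "\<forall>\<^sub>F y in at r. 0 \<le> poly p2 y"
        proof -
          have "\<forall>\<^sub>F y in at r. y \<noteq> r" by (simp add: eventually_at_filter)
          then show ?thesis
          proof (rule eventually_mono)
            fix y assume "y \<noteq> r"
            have "0 \<le> poly p y" using less.prems by auto
            also have "\<dots> = (y - r)^2 * poly p2 y" by (subst pp) (simp add: power2_eq_square algebra_simps)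
            finally show "0 \<le> poly p2 y" using \<open>y \<noteq> r\<close> by (simp add: zero_le_mult_iff)
          qed
        qed
        show ?thesis using True tendsto_lowerbound[OF lim ev] by simp
      qed
      obtain A B where AB: "\<forall>x. poly p2 x = (poly A x)^2 + (poly B x)^2"
          "2 * degree A \<le> degree p2" "2 * degree B \<le> degree p2"
        using less.hyps[of p2] dp nn by auto
      show ?thesis
      proof (intro exI conjI)
        show "\<forall>x. poly p x = (poly ([:-r,1:] * A) x)^2 + (poly ([:-r,1:] * B) x)^2"
        proof
          fix x
          have "poly p x = (x - r)^2 * poly p2 x" by (subst pp) (simp add: power2_eq_square algebra_simps)
          then show "poly p x = (poly ([:-r,1:] * A) x)^2 + (poly ([:-r,1:] * B) x)^2"
            using AB(1) by (simp add: power2_eq_square algebra_simps)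
        qed
        show "2 * degree ([:-r,1:] * A) \<le> degree p"
          using degree_mult_le[of "[:-r,1:]" A] AB dp by simp
        show "2 * degree ([:-r,1:] * B) \<le> degree p"
          using degree_mult_le[of "[:-r,1:]" B] AB dp by simp
      qed
    next
      case noroot: False
      have pne: "p \<noteq> 0" using False by auto
      obtain z where z0: "(\<Sum>i\<le>degree p. complex_of_real (coeff p i) * z^i) = 0"
      proof (rule fundamental_theorem_of_algebra[of "\<lambda>i. complex_of_real (coeff p i)" "degree p"])
        show "complex_of_real (coeff p 0) = 0 \<or> (\<exists>i\<in>{1..degree p}. complex_of_real (coeff p i) \<noteq> 0)"
          using False pne by (intro disjI2 bexI[of _ "degree p"]) auto
      qed
      have z: "poly (map_poly complex_of_real p) z = 0"
        using z0 by (simp add: poly_altdef degree_map_poly coeff_map_poly)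
      have "Im z \<noteq> 0"
      proof
        assume "Im z = 0"
        then have "z = of_real (Re z)" by (simp add: complex_eq_iff)
        with z have "poly p (Re z) = 0" using poly_map_of_real[of p "Re z"] by simp
        with noroot show False by blast
      qed
      define a where "a = Re z"
      define b where "b = Im z"
      define q where "q = [:-a,1:]^2 + [:b:]^2"
      have qpos: "poly q x > 0" for x
        using \<open>Im z \<noteq> 0\<close> by (simp add: q_def b_def add_nonneg_pos)
      then have qne: "q \<noteq> 0" by auto
      have dq: "degree q = 2" unfolding q_def
        by (simp add: power2_eq_square numeral_2_eq_2 degree_add_eq_left)
      have qz: "poly (map_poly complex_of_real q) z = 0"
        unfolding q_def a_def b_def
        by (simp add: map_poly_pCons complex_eq_iff power2_eq_square algebra_simps)
      define s where "s = p div q"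
      define m where "m = p mod q"
      have pe: "p = q * s + m" unfolding s_def m_def by simp
      have "degree m \<le> 1"
        using degree_mod_less[OF qne, of p] dq unfolding m_def by auto
      then obtain m0 m1 where mm: "m = [:m0, m1:]"
      proof -
        have "m = [:coeff m 0, coeff m 1:]"
          by (rule poly_eqI) (use \<open>degree m \<le> 1\<close> in \<open>auto simp: coeff_pCons coeff_eq_0 split: nat.split\<close>)
        then show ?thesis using that by blast
      qed
      have "poly (map_poly complex_of_real p) z = poly (map_poly complex_of_real q) z * poly (map_poly complex_of_real s) z + poly (map_poly complex_of_real m) z"
        by (subst pe) (simp only: mp_mult mp_add poly_add poly_mult)
      then have "poly (map_poly complex_of_real m) z = 0"
        using z qz by simp
      then have "m0 = 0 \<and> m1 = 0" using \<open>Im z \<noteq> 0\<close> unfolding mm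
        by (auto simp: map_poly_pCons complex_eq_iff)
      then have ps: "p = q * s" using pe mm by simp
      have sne: "s \<noteq> 0" using ps False by auto
      have ds: "degree p = degree s + 2" using ps sne qne dq by (simp add: degree_mult_eq)
      have snn: "poly s x \<ge> 0" for x
      proof -
        have "0 \<le> poly q x * poly s x" using less.prems ps by (metis poly_mult)
        then show ?thesis using qpos[of x] by (simp add: zero_le_mult_iff)
      qed
      obtain A B where AB: "\<forall>x. poly s x = (poly A x)^2 + (poly B x)^2"
          "2 * degree A \<le> degree s" "2 * degree B \<le> degree s"
        using less.hyps[of s] ds snn by auto
      show ?thesis
      proof (intro exI conjI)
        show "\<forall>x. poly p x = (poly ([:-a,1:] * A - [:b:] * B) x)^2 + (poly ([:b:] * A + [:-a,1:] * B) x)^2"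
        proof
          fix x
          have "poly p x = ((x - a)^2 + b^2) * poly s x" by (subst ps) (simp add: q_def power2_eq_square algebra_simps)
          then show "poly p x = (poly ([:-a,1:] * A - [:b:] * B) x)^2 + (poly ([:b:] * A + [:-a,1:] * B) x)^2"
            using AB(1) by (simp add: power2_eq_square algebra_simps)
        qed
        have d1: "degree ([:-a,1:] * A) \<le> 1 + degree A" using degree_mult_le[of "[:-a,1:]" A] by simp
        have d2: "degree ([:b:] * B) \<le> degree B" by (simp add: degree_smult_le)
        have d3: "degree ([:b:] * A) \<le> degree A" by (simp add: degree_smult_le)
        have d4: "degree ([:-a,1:] * B) \<le> 1 + degree B" using degree_mult_le[of "[:-a,1:]" B] by simp
        show "2 * degree ([:-a,1:] * A - [:b:] * B) \<le> degree p"
          using degree_diff_le_max[of "[:-a,1:] * A" "[:b:] * B"] d1 d2 AB ds by linarith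
        show "2 * degree ([:b:] * A + [:-a,1:] * B) \<le> degree p"
          using degree_add_le_max[of "[:b:] * A" "[:-a,1:] * B"] d3 d4 AB ds by linarith
      qed
    qed
  qed
qed



definition mon :: "('n::finite \<Rightarrow> nat) \<Rightarrow> real^'n \<Rightarrow> real" where
  "mon \<alpha> x = (\<Prod>i\<in>UNIV. (x $ i) ^ \<alpha> i)"

lemma is_form_mon: "is_form d f \<longleftrightarrow> (\<exists>c. \<forall>x. f x = (\<Sum>\<alpha>\<in>exps d. c \<alpha> * mon \<alpha> x))"
  unfolding is_form_def mon_def ..

lemma finite_exps: "finite (exps d :: ('n::finite \<Rightarrow> nat) set)"
proof -
  have "exps d \<subseteq> {\<alpha>::'n\<Rightarrow>nat. \<forall>i. (i \<in> UNIV \<longrightarrow> \<alpha> i \<in> {..d}) \<and> (i \<notin> UNIV \<longrightarrow> \<alpha> i = 0)}"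
  proof
    fix \<alpha> :: "'n \<Rightarrow> nat" assume "\<alpha> \<in> exps d"
    then have "sum \<alpha> UNIV = d" by (simp add: exps_def)
    moreover have "\<alpha> i \<le> sum \<alpha> UNIV" for i by (rule member_le_sum) auto
    ultimately show "\<alpha> \<in> {\<alpha>::'n\<Rightarrow>nat. \<forall>i. (i \<in> UNIV \<longrightarrow> \<alpha> i \<in> {..d}) \<and> (i \<notin> UNIV \<longrightarrow> \<alpha> i = 0)}" by auto
  qed
  moreover have "finite {\<alpha>::'n\<Rightarrow>nat. \<forall>i. (i \<in> UNIV \<longrightarrow> \<alpha> i \<in> {..d}) \<and> (i \<notin> UNIV \<longrightarrow> \<alpha> i = 0)}"
    by (rule finite_set_of_finite_funs) auto
  ultimately show ?thesis by (rule finite_subset)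
qed

lemma is_form_zero: "is_form d (\<lambda>x. 0)"
  unfolding is_form_def by (rule exI[of _ "\<lambda>_. 0"]) simp

lemma is_form_cong: "is_form d f \<Longrightarrow> d = d' \<Longrightarrow> (\<And>x. f x = g x) \<Longrightarrow> is_form d' g"
  unfolding is_form_def by auto

lemma is_form_add: "is_form d f \<Longrightarrow> is_form d g \<Longrightarrow> is_form d (\<lambda>x. f x + g x)"
  unfolding is_form_def
proof (elim exE)
  fix c e assume c: "\<forall>x. f x = (\<Sum>\<alpha>\<in>exps d. c \<alpha> * (\<Prod>i\<in>UNIV. x $ i ^ \<alpha> i))"
    and e: "\<forall>x. g x = (\<Sum>\<alpha>\<in>exps d. e \<alpha> * (\<Prod>i\<in>UNIV. x $ i ^ \<alpha> i))"
  show "\<exists>c. \<forall>x. f x + g x = (\<Sum>\<alpha>\<in>exps d. c \<alpha> * (\<Prod>i\<in>UNIV. x $ i ^ \<alpha> i))"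
    by (rule exI[of _ "\<lambda>\<alpha>. c \<alpha> + e \<alpha>"]) (simp add: c e sum.distrib distrib_right)
qed

lemma is_form_cmul: "is_form d f \<Longrightarrow> is_form d (\<lambda>x. a * f x)"
  unfolding is_form_def
proof (elim exE)
  fix c assume c: "\<forall>x. f x = (\<Sum>\<alpha>\<in>exps d. c \<alpha> * (\<Prod>i\<in>UNIV. x $ i ^ \<alpha> i))"
  show "\<exists>c. \<forall>x. a * f x = (\<Sum>\<alpha>\<in>exps d. c \<alpha> * (\<Prod>i\<in>UNIV. x $ i ^ \<alpha> i))"
    by (rule exI[of _ "\<lambda>\<alpha>. a * c \<alpha>"]) (simp add: c sum_distrib_left mult.assoc)
qed

lemma exps_0: "exps 0 = {\<lambda>_. 0}"
  unfolding exps_def by auto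

lemma is_form_const: "is_form 0 (\<lambda>x. a)"
  unfolding is_form_def exps_0 by (rule exI[of _ "\<lambda>_. a"]) simp

lemma is_form_coord: "is_form 1 (\<lambda>x. x $ i)"
proof -
  define \<delta> where "\<delta> = (\<lambda>j. if j = i then 1 else 0 :: nat)"
  have d1: "\<delta> \<in> exps 1" "\<delta> \<in> exps (Suc 0)" unfolding exps_def \<delta>_def by simp_all
  have m: "(\<Prod>j\<in>UNIV. (x $ j) ^ \<delta> j) = x $ i" for x :: "real^'a"
  proof -
    have "(\<Prod>j\<in>UNIV. (x $ j) ^ \<delta> j) = (\<Prod>j\<in>UNIV. if j = i then x $ j else 1)"
      by (rule prod.cong) (auto simp: \<delta>_def)
    also have "\<dots> = x $ i" by (simp add: prod.delta)
    finally show ?thesis .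
  qed
  show ?thesis unfolding is_form_def
    by (rule exI[of _ "\<lambda>\<alpha>. if \<alpha> = \<delta> then 1 else 0"])
      (simp add: if_distrib[of "\<lambda>c. c * _"] sum.delta[OF finite_exps] d1 m cong: if_cong)
qed

lemma mon_add:
  fixes x :: "real^'n::finite"
  shows "(\<Prod>i\<in>UNIV. (x $ i) ^ (\<alpha> i + \<beta> i)) = (\<Prod>i\<in>UNIV. (x $ i) ^ \<alpha> i) * (\<Prod>i\<in>UNIV. (x $ i) ^ \<beta> i)"
  by (simp add: power_add prod.distrib)

lemma is_form_mult:
  fixes f g :: "real^'n::finite \<Rightarrow> real"
  assumes "is_form a f" "is_form b g"
  shows "is_form (a + b) (\<lambda>x. f x * g x)"
proof -
  obtain c where c: "\<forall>x. f x = (\<Sum>\<alpha>\<in>exps a. c \<alpha> * mon \<alpha> x)" using assms(1) is_form_mon by blast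
  obtain e where e: "\<forall>x. g x = (\<Sum>\<alpha>\<in>exps b. e \<alpha> * mon \<alpha> x)" using assms(2) is_form_mon by blast
  define S :: "(('n\<Rightarrow>nat)\<times>('n\<Rightarrow>nat)) set" where "S = exps a \<times> exps b"
  define pl :: "('n\<Rightarrow>nat)\<times>('n\<Rightarrow>nat) \<Rightarrow> 'n \<Rightarrow> nat" where "pl = (\<lambda>p. (\<lambda>i. fst p i + snd p i))"
  define C where "C = (\<lambda>\<gamma>. \<Sum>p\<in>{p. p \<in> S \<and> pl p = \<gamma>}. c (fst p) * e (snd p))"
  have fS: "finite S" unfolding S_def using finite_exps by blast
  have im: "pl ` S \<subseteq> exps (a + b)"
    unfolding S_def pl_def exps_def by (auto simp: sum.distrib)
  have "f x * g x = (\<Sum>\<gamma>\<in>exps (a+b). C \<gamma> * mon \<gamma> x)" for x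
  proof -
    have "f x * g x = (\<Sum>\<alpha>\<in>exps a. \<Sum>\<beta>\<in>exps b. (c \<alpha> * mon \<alpha> x) * (e \<beta> * mon \<beta> x))"
      by (simp add: c e sum_product)
    also have "\<dots> = (\<Sum>p\<in>S. c (fst p) * e (snd p) * mon (pl p) x)"
      unfolding S_def sum.cartesian_product
      by (rule sum.cong) (auto simp: pl_def mon_def mon_add)
    also have "\<dots> = (\<Sum>\<gamma>\<in>exps (a+b). \<Sum>p\<in>{p. p \<in> S \<and> pl p = \<gamma>}. c (fst p) * e (snd p) * mon (pl p) x)"
      by (rule sum.group[OF fS finite_exps im, symmetric])
    also have "\<dots> = (\<Sum>\<gamma>\<in>exps (a+b). C \<gamma> * mon \<gamma> x)"
      unfolding C_def sum_distrib_right
      by (rule sum.cong[OF refl], rule sum.cong) auto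
    finally show ?thesis .
  qed
  then show ?thesis unfolding is_form_mon by blast
qed

lemma is_form_mult': "is_form a f \<Longrightarrow> is_form b g \<Longrightarrow> d = a + b \<Longrightarrow> is_form d (\<lambda>x. f x * g x)"
  using is_form_mult by blast

lemma is_form_sum: "finite S \<Longrightarrow> (\<And>i. i \<in> S \<Longrightarrow> is_form d (F i)) \<Longrightarrow> is_form d (\<lambda>x. \<Sum>i\<in>S. F i x)"
proof (induction S rule: finite_induct)
  case empty
  then show ?case by (simp add: is_form_zero)
next
  case (insert a S)
  then show ?case by (simp add: is_form_add)
qed

lemma is_form_prod: "finite S \<Longrightarrow> (\<And>i. i \<in> S \<Longrightarrow> is_form (D i) (F i)) \<Longrightarrow> is_form (\<Sum>i\<in>S. D i) (\<lambda>x. \<Prod>i\<in>S. F i x)"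
proof (induction S rule: finite_induct)
  case empty
  then show ?case using is_form_const[of 1] by simp
next
  case (insert a S)
  then show ?case by (simp add: is_form_mult)
qed

lemma is_form_pow: "is_form d f \<Longrightarrow> is_form (m * d) (\<lambda>x. f x ^ m)"
proof (induction m)
  case 0
  then show ?case using is_form_const[of 1] by simp
next
  case (Suc m)
  then show ?case using is_form_mult[of d f "m*d" "\<lambda>x. f x ^ m"] by simp
qed

lemma is_form_inner: "is_form 1 (\<lambda>x::real^'n::finite. a \<bullet> x)"
proof -
  have "is_form 1 (\<lambda>x::real^'n. \<Sum>i\<in>UNIV. a $ i * x $ i)"
    by (intro is_form_sum is_form_cmul is_form_coord) auto
  then show ?thesis by (simp add: inner_vec_def)
qed

lemma is_form_homog: "is_form d f \<Longrightarrow> f (c *\<^sub>R x) = c ^ d * f x"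
proof -
  assume "is_form d f"
  then obtain co where co: "\<forall>x. f x = (\<Sum>\<alpha>\<in>exps d. co \<alpha> * mon \<alpha> x)" using is_form_mon by blast
  have "mon \<alpha> (c *\<^sub>R x) = c ^ d * mon \<alpha> x" if "\<alpha> \<in> exps d" for \<alpha>
  proof -
    have "mon \<alpha> (c *\<^sub>R x) = (\<Prod>i\<in>UNIV. c ^ \<alpha> i) * mon \<alpha> x"
      by (simp add: mon_def power_mult_distrib prod.distrib)
    also have "(\<Prod>i\<in>UNIV. c ^ \<alpha> i) = c ^ d" using that by (simp add: exps_def power_sum[symmetric])
    finally show ?thesis .
  qed
  then show ?thesis by (simp add: co sum_distrib_left mult.left_commute)
qed

lemma is_form_cont: "is_form d f \<Longrightarrow> continuous_on UNIV f"
proof -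
  assume "is_form d f"
  then obtain co where co: "\<forall>x. f x = (\<Sum>\<alpha>\<in>exps d. co \<alpha> * (\<Prod>i\<in>UNIV. (x $ i) ^ \<alpha> i))" unfolding is_form_def by blast
  have "continuous_on UNIV (\<lambda>x::real^'a. \<Sum>\<alpha>\<in>exps d. co \<alpha> * (\<Prod>i\<in>UNIV. (x $ i) ^ \<alpha> i))"
    by (intro continuous_intros)
  moreover have "f = (\<lambda>x. \<Sum>\<alpha>\<in>exps d. co \<alpha> * (\<Prod>i\<in>UNIV. (x $ i) ^ \<alpha> i))" using co by auto
  ultimately show ?thesis by simp
qed



lemma form_restrict:
  fixes f :: "real^'n::finite \<Rightarrow> real"
  assumes "is_form d f"
  shows "\<exists>P. (\<forall>s. f (s *\<^sub>R w + u) = poly P s) \<and> degree P \<le> d"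
proof -
  obtain co where co: "\<forall>x. f x = (\<Sum>\<alpha>\<in>exps d. co \<alpha> * (\<Prod>i\<in>UNIV. (x $ i) ^ \<alpha> i))"
    using assms unfolding is_form_def by blast
  define P where "P = (\<Sum>\<alpha>\<in>exps d. smult (co \<alpha>) (\<Prod>i\<in>UNIV. [:u $ i, w $ i:] ^ \<alpha> i))"
  have "f (s *\<^sub>R w + u) = poly P s" for s
    by (simp add: P_def co poly_sum poly_prod algebra_simps)
  moreover have "degree P \<le> d"
    unfolding P_def
  proof (rule degree_sum_le[OF finite_exps])
    fix \<alpha> :: "'n \<Rightarrow> nat" assume "\<alpha> \<in> exps d"
    then have sd: "(\<Sum>i\<in>UNIV. \<alpha> i) = d" by (simp add: exps_def)
    have "degree (smult (co \<alpha>) (\<Prod>i\<in>UNIV. [:u $ i, w $ i:] ^ \<alpha> i)) \<le> degree (\<Prod>i\<in>UNIV. [:u $ i, w $ i:] ^ \<alpha> i)"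
      by (rule degree_smult_le)
    also have "\<dots> \<le> (\<Sum>i\<in>UNIV. degree ([:u $ i, w $ i:] ^ \<alpha> i))"
      using degree_prod_sum_le[of UNIV "\<lambda>i. [:u $ i, w $ i:] ^ \<alpha> i"] by (simp add: o_def)
    also have "\<dots> \<le> (\<Sum>i\<in>UNIV. \<alpha> i)"
    proof (rule sum_mono)
      fix i
      have "degree ([:u $ i, w $ i:] ^ \<alpha> i) \<le> degree [:u $ i, w $ i:] * \<alpha> i" by (rule degree_power_le)
      also have "\<dots> \<le> \<alpha> i" using degree_pCons_le[of "u $ i" "[:w $ i:]"] by simp
      finally show "degree ([:u $ i, w $ i:] ^ \<alpha> i) \<le> \<alpha> i" .
    qed
    finally show "degree (smult (co \<alpha>) (\<Prod>i\<in>UNIV. [:u $ i, w $ i:] ^ \<alpha> i)) \<le> d" using sd by simp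
  qed
  ultimately show ?thesis by blast
qed

lemma poly_sum_le:
  fixes A :: "real poly"
  assumes "degree A \<le> k"
  shows "poly A y = (\<Sum>j\<le>k. coeff A j * y ^ j)"
proof -
  have "poly A y = (\<Sum>j\<le>degree A. coeff A j * y ^ j)" by (rule poly_altdef)
  also have "\<dots> = (\<Sum>j\<le>k. coeff A j * y ^ j)"
    by (rule sum.mono_neutral_left) (use assms in \<open>auto simp: coeff_eq_0\<close>)
  finally show ?thesis .
qed

lemma homog_poly:
  fixes t :: real and A :: "real poly"
  assumes "degree A \<le> k" "t \<noteq> 0"
  shows "t ^ k * poly A (s / t) = (\<Sum>j\<le>k. coeff A j * s ^ j * t ^ (k - j))"
proof -
  have "t ^ k * poly A (s / t) = (\<Sum>j\<le>k. t ^ k * (coeff A j * (s / t) ^ j))"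
    by (simp add: poly_sum_le[OF assms(1)] sum_distrib_left)
  also have "\<dots> = (\<Sum>j\<le>k. coeff A j * s ^ j * t ^ (k - j))"
  proof (rule sum.cong[OF refl])
    fix j assume "j \<in> {..k}"
    then have "t ^ k = t ^ j * t ^ (k - j)" by (simp add: power_add[symmetric])
    then show "t ^ k * (coeff A j * (s / t) ^ j) = coeff A j * s ^ j * t ^ (k - j)"
      using assms(2) by (simp add: power_divide field_simps)
  qed
  finally show ?thesis .
qed

lemma eq_at_0:
  fixes \<phi> \<psi> :: "real \<Rightarrow> real"
  assumes "isCont \<phi> 0" "isCont \<psi> 0" "\<And>t. t \<noteq> 0 \<Longrightarrow> \<phi> t = \<psi> t"
  shows "\<phi> 0 = \<psi> 0"
proof -
  have l1: "(\<phi> \<longlongrightarrow> \<phi> 0) (at 0)" using assms(1) by (simp add: isCont_def)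
  have l2: "(\<psi> \<longlongrightarrow> \<psi> 0) (at 0)" using assms(2) by (simp add: isCont_def)
  have ev: "\<forall>\<^sub>F t in at 0. \<phi> t = \<psi> t" using assms(3) by (auto simp: eventually_at_filter)
  have "(\<phi> \<longlongrightarrow> \<psi> 0) (at 0)" using tendsto_cong[OF ev] l2 by simp
  with l1 show ?thesis using LIM_unique by blast
qed

lemma binary_sos:
  fixes f :: "real^'n::finite \<Rightarrow> real"
  assumes f: "is_form (2*k) f" and nn: "\<forall>x. f x \<ge> 0"
  shows "\<exists>b c :: nat \<Rightarrow> real. \<forall>s t. f (s *\<^sub>R w + t *\<^sub>R u) =
     (\<Sum>j\<le>k. b j * s ^ j * t ^ (k - j))^2 + (\<Sum>j\<le>k. c j * s ^ j * t ^ (k - j))^2"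
proof -
  obtain P where P: "\<forall>s. f (s *\<^sub>R w + u) = poly P s" "degree P \<le> 2*k"
    using form_restrict[OF f] by blast
  have "\<forall>x. poly P x \<ge> 0" using P nn by metis
  then obtain A B where AB: "\<forall>x. poly P x = (poly A x)^2 + (poly B x)^2"
    "2 * degree A \<le> degree P" "2 * degree B \<le> degree P"
    using nonneg_poly_sos by blast
  have dA: "degree A \<le> k" and dB: "degree B \<le> k" using AB P by linarith+
  define R where "R = (\<lambda>s t. (\<Sum>j\<le>k. coeff A j * s ^ j * t ^ (k - j))^2 + (\<Sum>j\<le>k. coeff B j * s ^ j * t ^ (k - j))^2)"
  have ne: "f (s *\<^sub>R w + t *\<^sub>R u) = R s t" if "t \<noteq> 0" for s t
  proof -
    have "f (s *\<^sub>R w + t *\<^sub>R u) = f (t *\<^sub>R ((s / t) *\<^sub>R w + u))"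
      using that by (simp add: scaleR_add_right)
    also have "\<dots> = t ^ (2*k) * f ((s / t) *\<^sub>R w + u)" by (rule is_form_homog[OF f])
    also have "\<dots> = (t ^ k * poly A (s/t))^2 + (t ^ k * poly B (s/t))^2"
      using P AB by (simp add: power_mult_distrib power_mult[symmetric] algebra_simps)
    also have "\<dots> = R s t" unfolding R_def using homog_poly[OF dA that] homog_poly[OF dB that] by simp
    finally show ?thesis .
  qed
  have fc: "continuous_on UNIV f" by (rule is_form_cont[OF f])
  have "f (s *\<^sub>R w + t *\<^sub>R u) = R s t" for s t
  proof (cases "t = 0")
    case False then show ?thesis using ne by blast
  next
    case True
    have c1: "isCont (\<lambda>t. f (s *\<^sub>R w + t *\<^sub>R u)) 0"
    proof -
      have "continuous_on UNIV (\<lambda>t. f (s *\<^sub>R w + t *\<^sub>R u))"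
        by (rule continuous_on_compose2[OF fc]) (auto intro!: continuous_intros)
      then show ?thesis by (simp add: continuous_on_eq_continuous_at)
    qed
    have c2: "isCont (R s) 0" unfolding R_def by (intro continuous_intros)
    have "f (s *\<^sub>R w + 0 *\<^sub>R u) = R s 0"
      using eq_at_0[OF c1 c2] ne by blast
    then show ?thesis using True by simp
  qed
  then show ?thesis unfolding R_def by blast
qed



lemma orth_inner:
  fixes Q :: "real^'n^'n"
  assumes "orthogonal_matrix Q"
  shows "(Q *v x) \<bullet> (Q *v y) = x \<bullet> y"
proof -
  have "orthogonal_transformation (\<lambda>x. Q *v x)"
    using assms by (simp add: orthogonal_transformation_matrix)
  then show ?thesis by (simp add: orthogonal_transformation_def)
qed

lemma orth_expand:
  fixes Q :: "real^'n^'n"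
  assumes "orthogonal_matrix Q"
  shows "x = (\<Sum>i\<in>UNIV. ((Q *v axis i 1) \<bullet> x) *\<^sub>R (Q *v axis i 1))"
proof -
  have QT: "Q ** transpose Q = mat 1" using assms by (simp add: orthogonal_matrix_def)
  have "x = Q *v (transpose Q *v x)" by (simp only: matrix_vector_mul_assoc QT matrix_vector_mul_lid)
  also have "\<dots> = (\<Sum>i\<in>UNIV. (transpose Q *v x) $ i *s column i Q)"
    by (rule matrix_mult_sum)
  also have "\<dots> = (\<Sum>i\<in>UNIV. ((Q *v axis i 1) \<bullet> x) *\<^sub>R (Q *v axis i 1))"
  proof (rule sum.cong[OF refl])
    fix i
    have "(transpose Q *v x) $ i = column i Q \<bullet> x"
      by (simp add: matrix_vector_mult_def transpose_def column_def inner_vec_def mult.commute)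
    then show "(transpose Q *v x) $ i *s column i Q = ((Q *v axis i 1) \<bullet> x) *\<^sub>R (Q *v axis i 1)"
      by (simp add: matrix_vector_mult_basis scalar_mult_eq_scaleR)
  qed
  finally show ?thesis .
qed

lemma mkF:
  fixes Q :: "real^'n^'n"
  assumes Q: "orthogonal_matrix Q" and kl: "k \<noteq> l" and jl: "j \<noteq> l"
  shows "\<exists>F. orthogonal_matrix F \<and> det F = -1 \<and> F *v (Q *v axis k 1) = Q *v axis k 1
            \<and> F *v (Q *v axis j 1) = Q *v axis j 1"
proof -
  define \<sigma> where "\<sigma> = (\<lambda>a. if a = l then -1 else 1 :: real)"
  define D :: "real^'n^'n" where "D = (\<chi> a b. if a = b then \<sigma> a else 0)"
  have s2: "\<sigma> a * \<sigma> a = 1" for a by (simp add: \<sigma>_def)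
  have "transpose D ** D = mat 1"
  proof -
    have "(\<Sum>b\<in>UNIV. (if b = a then \<sigma> b else 0) * (if b = c then \<sigma> b else 0)) = (if a = c then 1 else 0)" for a c
    proof -
      have "(\<Sum>b\<in>UNIV. (if b = a then \<sigma> b else 0) * (if b = c then \<sigma> b else 0)) =
            (\<Sum>b\<in>UNIV. if b = a then \<sigma> b * (if b = c then \<sigma> b else 0) else 0)"
        by (rule sum.cong) auto
      also have "\<dots> = \<sigma> a * (if a = c then \<sigma> a else 0)" by (simp add: sum.delta)
      also have "\<dots> = (if a = c then 1 else 0)" using s2 by simp
      finally show ?thesis .
    qed
    then show ?thesis
      by (simp add: vec_eq_iff matrix_matrix_mult_def transpose_def mat_def D_def)
  qed
  then have oD: "orthogonal_matrix D" by (simp add: orthogonal_matrix)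
  have dD: "det D = -1"
  proof -
    have "det D = (\<Prod>i\<in>UNIV. D $ i $ i)" by (rule det_diagonal) (simp add: D_def)
    also have "\<dots> = (\<Prod>i\<in>UNIV. if i = l then -1 else 1)" by (simp add: D_def \<sigma>_def)
    also have "\<dots> = -1" by (simp add: prod.delta)
    finally show ?thesis .
  qed
  have Dax: "D *v axis m 1 = axis m 1" if "m \<noteq> l" for m
  proof -
    have "(D *v axis m 1) $ a = axis m 1 $ a" for a
    proof -
      have "(D *v axis m 1) $ a = (\<Sum>b\<in>UNIV. (if a = b then \<sigma> a else 0) * (if b = m then 1 else 0))"
        by (simp add: matrix_vector_mult_def D_def axis_def)
      also have "\<dots> = (\<Sum>b\<in>UNIV. if b = a then (if a = m then \<sigma> a else 0) else 0)"
        by (rule sum.cong) auto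
      also have "\<dots> = axis m 1 $ a" using that by (simp add: sum.delta axis_def \<sigma>_def)
      finally show ?thesis .
    qed
    then show ?thesis by (simp add: vec_eq_iff)
  qed
  define F where "F = Q ** D ** transpose Q"
  have TQ: "transpose Q ** Q = mat 1" using Q by (simp add: orthogonal_matrix_def)
  have oF: "orthogonal_matrix F"
    unfolding F_def using Q oD by (intro orthogonal_matrix_mul) (auto simp: orthogonal_matrix_transpose)
  have dQ: "det Q * det Q = 1" using det_orthogonal_matrix[OF Q] by auto
  have dF: "det F = -1" unfolding F_def using dQ dD by (simp add: det_mul)
  have Fax: "F *v (Q *v axis m 1) = Q *v axis m 1" if "m \<noteq> l" for m
  proof -
    have "F *v (Q *v axis m 1) = Q *v (D *v ((transpose Q ** Q) *v axis m 1))"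
      unfolding F_def by (simp add: matrix_vector_mul_assoc matrix_mul_assoc)
    also have "\<dots> = Q *v axis m 1" using TQ Dax[OF that] by simp
    finally show ?thesis .
  qed
  show ?thesis using oF dF Fax kl jl by blast
qed

lemma rot3:
  fixes f :: "real^'n \<Rightarrow> real" and u w :: "real^'n" and F :: "real^'n^'n"
  assumes inv: "\<forall>A\<in>J u. \<forall>x. f (A *v x) = f x"
    and oF: "orthogonal_matrix F" and dF: "det F = -1" and Fu: "F *v u = u" and Fw: "F *v w = w"
    and nu: "u \<bullet> u = 1" and nw: "w \<bullet> w = 1" and uw: "u \<bullet> w = 0"
  shows "f x = f (norm (x - (u \<bullet> x) *\<^sub>R u) *\<^sub>R w + (u \<bullet> x) *\<^sub>R u)"
proof -
  define t where "t = u \<bullet> x"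
  define y where "y = x - t *\<^sub>R u"
  define r where "r = norm y"
  define a where "a = y - r *\<^sub>R w"
  define \<kappa> where "\<kappa> = 2 / (a \<bullet> a)"
  define H where "H = (\<lambda>z. z - ((a \<bullet> z) * \<kappa>) *\<^sub>R a)"
  have yu: "u \<bullet> y = 0" unfolding y_def t_def using nu by (simp add: inner_diff_right)
  have au: "a \<bullet> u = 0" unfolding a_def using yu uw by (simp add: inner_diff_left inner_diff_right inner_commute)
  have yy: "y \<bullet> y = r^2" unfolding r_def by (simp add: power2_norm_eq_inner)
  have linH: "linear H"
    by (rule linearI) (simp_all add: H_def inner_add_right algebra_simps scaleR_add_left)
  have kk: "\<kappa> * \<kappa> * (a \<bullet> a) = 2 * \<kappa>" if "a \<noteq> 0"
    using that by (simp add: \<kappa>_def field_simps)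
  have innH: "H z \<bullet> H z' = z \<bullet> z'" for z z'
  proof (cases "a = 0")
    case True then show ?thesis by (simp add: H_def)
  next
    case False
    have "H z \<bullet> H z' = z \<bullet> z' - 2 * \<kappa> * (a \<bullet> z) * (a \<bullet> z') + (\<kappa> * \<kappa> * (a \<bullet> a)) * (a \<bullet> z) * (a \<bullet> z')"
      by (simp add: H_def inner_diff_left inner_diff_right inner_commute algebra_simps)
    then show ?thesis using kk[OF False] by simp
  qed
  have otH: "orthogonal_transformation H"
    using linH innH by (simp add: orthogonal_transformation_def)
  define M where "M = matrix H"
  have oM: "orthogonal_matrix M" using otH unfolding M_def by (simp add: orthogonal_transformation_matrix)
  have MH: "M *v z = H z" for z
    using matrix_vector_mul(2)[OF linH] unfolding M_def by metis
  have Hu: "H u = u" using au by (simp add: H_def)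
  have Hy: "H y = r *\<^sub>R w"
  proof (cases "a = 0")
    case True
    then have "y = r *\<^sub>R w" by (simp add: a_def)
    then show ?thesis using True by (simp add: H_def)
  next
    case False
    have ay: "a \<bullet> y = r^2 - r * (w \<bullet> y)"
      unfolding a_def using yy by (simp add: inner_diff_left)
    have aa: "a \<bullet> a = 2 * (a \<bullet> y)"
      unfolding a_def using yy nw by (simp add: inner_diff_left inner_diff_right inner_commute ay[unfolded a_def] algebra_simps power2_eq_square)
    have "a \<bullet> a \<noteq> 0" using False by simp
    then have "(a \<bullet> y) * \<kappa> = 1" using aa by (simp add: \<kappa>_def)
    then show ?thesis by (simp add: H_def a_def)
  qed
  have xe: "x = y + t *\<^sub>R u" by (simp add: y_def)
  have Mx: "M *v x = r *\<^sub>R w + t *\<^sub>R u"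
    unfolding MH xe using linH Hu Hy by (simp add: linear_add linear_scale)
  have "\<exists>A\<in>J u. A *v x = r *\<^sub>R w + t *\<^sub>R u"
  proof (cases "det M = 1")
    case True
    have "M \<in> J u" unfolding J_def SO_def using True oM MH Hu by simp
    then show ?thesis using Mx by blast
  next
    case False
    then have "det M = -1" using det_orthogonal_matrix[OF oM] by auto
    then have "det (F ** M) = 1" using dF by (simp add: det_mul)
    moreover have "orthogonal_matrix (F ** M)" using oF oM by (rule orthogonal_matrix_mul)
    moreover have "(F ** M) *v u = u" using MH Hu Fu by (simp add: matrix_vector_mul_assoc[symmetric])
    ultimately have "F ** M \<in> J u" unfolding J_def SO_def by simp
    moreover have "(F ** M) *v x = r *\<^sub>R w + t *\<^sub>R u"
      using Mx Fu Fw by (simp add: matrix_vector_mul_assoc[symmetric] matrix_vector_right_distrib matrix_vector_mult_scaleR)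
    ultimately show ?thesis by blast
  qed
  then obtain A where "A \<in> J u" "A *v x = r *\<^sub>R w + t *\<^sub>R u" by blast
  then have "f x = f (r *\<^sub>R w + t *\<^sub>R u)" using inv by metis
  then show ?thesis unfolding r_def y_def t_def .
qed



definition sosk :: "nat \<Rightarrow> (real^'n::finite \<Rightarrow> real) \<Rightarrow> bool" where
  "sosk k f \<longleftrightarrow> (\<exists>m (g :: nat \<Rightarrow> real^'n \<Rightarrow> real). (\<forall>i<m. is_form k (g i)) \<and> (\<forall>x. f x = (\<Sum>i<m. (g i x)^2)))"

lemma sos_sq: "is_form k q \<Longrightarrow> sosk k (\<lambda>x. (q x)^2)"
  unfolding sosk_def by (rule exI[of _ 1], rule exI[of _ "\<lambda>_. q"]) simp

lemma sos_zero: "sosk k (\<lambda>x. 0)"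
  unfolding sosk_def by (rule exI[of _ 0]) simp

lemma sum_concat: "(\<Sum>i<m1+m2. G i) = (\<Sum>i<m1. G i) + (\<Sum>i<m2. G (m1 + i :: nat))"
  by (induction m2) (simp_all add: algebra_simps)

lemma sos_add:
  fixes f g :: "real^'n::finite \<Rightarrow> real"
  assumes "sosk k f" "sosk k g"
  shows "sosk k (\<lambda>x. f x + g x)"
proof -
  obtain m1 and g1 :: "nat \<Rightarrow> real^'n \<Rightarrow> real" where 1: "\<forall>i<m1. is_form k (g1 i)" "\<forall>x. f x = (\<Sum>i<m1. (g1 i x)^2)"
    using assms(1) unfolding sosk_def by blast
  obtain m2 and g2 :: "nat \<Rightarrow> real^'n \<Rightarrow> real" where 2: "\<forall>i<m2. is_form k (g2 i)" "\<forall>x. g x = (\<Sum>i<m2. (g2 i x)^2)"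
    using assms(2) unfolding sosk_def by blast
  define G where "G = (\<lambda>i. if i < m1 then g1 i else g2 (i - m1))"
  have "\<forall>i<m1+m2. is_form k (G i)" using 1 2 by (auto simp: G_def)
  moreover have "f x + g x = (\<Sum>i<m1+m2. (G i x)^2)" for x
    unfolding sum_concat using 1 2 by (simp add: G_def)
  ultimately show ?thesis unfolding sosk_def by blast
qed

lemma sos_cong: "sosk k f \<Longrightarrow> (\<And>x. f x = g x) \<Longrightarrow> sosk k g"
  unfolding sosk_def by simp

lemma sos_sum: "finite S \<Longrightarrow> (\<And>i. i \<in> S \<Longrightarrow> is_form k (q i)) \<Longrightarrow> sosk k (\<lambda>x. \<Sum>i\<in>S. (q i x)^2)"
proof (induction S rule: finite_induct)
  case empty
  then show ?case by (simp add: sos_zero)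
next
  case (insert a S)
  then show ?case by (simp add: sos_add sos_sq)
qed

lemma is_form_bin: "is_form k (\<lambda>x::real^'n::finite. \<Sum>j\<le>k. b j * (w \<bullet> x)^j * (u \<bullet> x)^(k-j))"
proof (rule is_form_sum)
  fix j assume "j \<in> {..k}"
  then have d: "k = j * 1 + (k - j) * 1" by simp
  show "is_form k (\<lambda>x::real^'n. b j * (w \<bullet> x)^j * (u \<bullet> x)^(k-j))"
    by (rule is_form_mult'[OF is_form_cmul[OF is_form_pow[OF is_form_inner]] is_form_pow[OF is_form_inner] d])
qed simp

lemma eo_split:
  fixes r t :: real
  shows "(\<Sum>j\<le>k. b j * r^j * t^(k-j)) = (\<Sum>j\<le>k. if even j then b j * (r^2)^(j div 2) * t^(k-j) else 0)
          + r * (\<Sum>j\<le>k. if odd j then b j * (r^2)^(j div 2) * t^(k-j) else 0)"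
proof -
  have e: "b j * r^j * t^(k-j) = (if even j then b j * (r^2)^(j div 2) * t^(k-j) else 0)
          + r * (if odd j then b j * (r^2)^(j div 2) * t^(k-j) else 0)" for j
  proof (cases "even j")
    case True
    then obtain q where q: "j = 2 * q" by blast
    then show ?thesis by (simp add: power_mult)
  next
    case False
    then obtain q where q: "j = 2 * q + 1" using oddE by blast
    then show ?thesis by (simp add: power_mult power_add)
  qed
  show ?thesis by (simp add: e sum.distrib sum_distrib_left)
qed



theorem lemma6p3:
  fixes f :: "real^'n::finite \<Rightarrow> real" and v :: "real^'n" and k :: nat
  assumes "is_form (2*k) f"
    and "\<forall>x. f x \<ge> 0"
    and "\<forall>A\<in>J v. \<forall>x. f (A *v x) = f x"
  shows "\<exists>m (g :: nat \<Rightarrow> real^'n \<Rightarrow> real).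
           (\<forall>i<m. is_form k (g i)) \<and> (\<forall>x. f x = (\<Sum>i<m. (g i x)^2))"
proof -
  note f = assms(1) and nn = assms(2)
  obtain k0 :: 'n where True by blast
  obtain u :: "real^'n" where nu: "norm u = 1" and inv: "\<forall>A\<in>J u. \<forall>x. f (A *v x) = f x"
  proof (cases "v = 0")
    case True
    have "\<forall>A\<in>J (axis k0 1). \<forall>x. f (A *v x) = f x"
      using assms(3) True by (simp add: J_def)
    then show ?thesis using that[of "axis k0 1"] by simp
  next
    case False
    define u where "u = v /\<^sub>R norm v"
    have nu: "norm u = 1" using False by (simp add: u_def)
    have vu: "v = norm v *\<^sub>R u" using False by (simp add: u_def)
    have "A \<in> J v" if "A \<in> J u" for A
    proof -
      have "A *v u = u" "A \<in> SO" using that by (auto simp: J_def)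
      then have "A *v v = v" by (subst (1 2) vu) (simp add: matrix_vector_mult_scaleR)
      then show ?thesis using \<open>A \<in> SO\<close> by (simp add: J_def)
    qed
    then show ?thesis using that[OF nu] assms(3) by blast
  qed
  obtain Q where Q: "orthogonal_matrix Q" and Qu: "Q *v axis k0 1 = u"
    using orthogonal_matrix_exists_basis[OF nu] by metis
  define e where "e = (\<lambda>i. Q *v axis i (1::real))"
  have ee: "e i \<bullet> e i' = (if i = i' then 1 else 0)" for i i'
    unfolding e_def orth_inner[OF Q] by (simp add: inner_axis_axis)
  have ek: "e k0 = u" using Qu by (simp add: e_def)
  have exp: "x = (\<Sum>i\<in>UNIV. (e i \<bullet> x) *\<^sub>R e i)" for x
    unfolding e_def by (rule orth_expand[OF Q])
  have "sosk k f"
  proof -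
    consider (one) "\<forall>i::'n. i = k0"
      | (two) j where "j \<noteq> k0" "(UNIV :: 'n set) = {k0, j}"
      | (three) j l where "j \<noteq> k0" "l \<noteq> k0" "l \<noteq> j"
    proof -
      show ?thesis if h1: "\<forall>i::'n. i = k0 \<Longrightarrow> thesis"
        and h2: "\<And>j. j \<noteq> k0 \<Longrightarrow> (UNIV :: 'n set) = {k0, j} \<Longrightarrow> thesis"
        and h3: "\<And>j l. j \<noteq> k0 \<Longrightarrow> l \<noteq> k0 \<Longrightarrow> l \<noteq> j \<Longrightarrow> thesis"
      proof (cases "\<forall>i::'n. i = k0")
        case True then show ?thesis using h1 by blast
      next
        case False
        then obtain j where j: "j \<noteq> k0" by blast
        show ?thesis
        proof (cases "\<exists>l. l \<noteq> k0 \<and> l \<noteq> j")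
          case True then show ?thesis using h3 j by blast
        next
          case False
          then have "(UNIV :: 'n set) = {k0, j}" by blast
          then show ?thesis using h2 j by blast
        qed
      qed
    qed
    then show ?thesis
    proof cases
      case one
      have w: "x = (0 \<bullet> x) *\<^sub>R 0 + (u \<bullet> x) *\<^sub>R u" for x :: "real^'n"
      proof -
        have U: "(UNIV :: 'n set) = {k0}" using one by blast
        show ?thesis using exp[of x] unfolding U by (simp add: ek)
      qed
      obtain b c where bc: "\<forall>s t. f (s *\<^sub>R (0::real^'n) + t *\<^sub>R u) =
          (\<Sum>j\<le>k. b j * s ^ j * t ^ (k - j))^2 + (\<Sum>j\<le>k. c j * s ^ j * t ^ (k - j))^2"
        using binary_sos[OF f nn] by blast
      have "sosk k (\<lambda>x. (\<Sum>j\<le>k. b j * (0 \<bullet> x) ^ j * (u \<bullet> x) ^ (k - j))^2 + (\<Sum>j\<le>k. c j * (0 \<bullet> x) ^ j * (u \<bullet> x) ^ (k - j))^2)"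
        by (intro sos_add sos_sq is_form_bin)
      then show ?thesis
        by (rule sos_cong) (metis bc w)
    next
      case (two j)
      define w where "w = e j"
      have wx: "x = (w \<bullet> x) *\<^sub>R w + (u \<bullet> x) *\<^sub>R u" for x :: "real^'n"
      proof -
        have "x = (u \<bullet> x) *\<^sub>R u + (e j \<bullet> x) *\<^sub>R e j"
          using exp[of x] unfolding two(2) using two(1) by (simp add: ek)
        then show ?thesis unfolding w_def by (metis add.commute)
      qed
      obtain b c where bc: "\<forall>s t. f (s *\<^sub>R w + t *\<^sub>R u) =
          (\<Sum>j\<le>k. b j * s ^ j * t ^ (k - j))^2 + (\<Sum>j\<le>k. c j * s ^ j * t ^ (k - j))^2"
        using binary_sos[OF f nn] by blast
      have "sosk k (\<lambda>x. (\<Sum>j\<le>k. b j * (w \<bullet> x) ^ j * (u \<bullet> x) ^ (k - j))^2 + (\<Sum>j\<le>k. c j * (w \<bullet> x) ^ j * (u \<bullet> x) ^ (k - j))^2)"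
        by (intro sos_add sos_sq is_form_bin)
      then show ?thesis
        by (rule sos_cong) (metis bc wx)
    next
      case (three j l)
      define w where "w = e j"
      obtain F where F: "orthogonal_matrix F" "det F = -1" "F *v u = u" "F *v w = w"
        using mkF[OF Q three(2)[symmetric] three(3)[symmetric]] Qu unfolding w_def e_def by metis
      have uu: "u \<bullet> u = 1" using ee[of k0 k0] ek by simp
      have ww: "w \<bullet> w = 1" using ee[of j j] by (simp add: w_def)
      have uw: "u \<bullet> w = 0" using ee[of k0 j] ek three(1) by (simp add: w_def)
      define h where "h = (\<lambda>s t. f (s *\<^sub>R w + t *\<^sub>R u))"
      have key: "f x = h (norm (x - (u \<bullet> x) *\<^sub>R u)) (u \<bullet> x)" for x
        unfolding h_def by (rule rot3[OF inv F uu ww uw])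
      have habs: "h s t = h \<bar>s\<bar> t" for s t
      proof -
        have "u \<bullet> (s *\<^sub>R w + t *\<^sub>R u) = t" using uu uw by (simp add: inner_add_right)
        then have "h s t = h (norm (s *\<^sub>R w)) t" using key[of "s *\<^sub>R w + t *\<^sub>R u"] by (simp add: h_def)
        then show ?thesis using ww by (simp add: norm_eq_1[symmetric])
      qed
      have heven: "h (-s) t = h s t" for s t using habs[of s t] habs[of "-s" t] by simp
      obtain b c where bc: "\<forall>s t. h s t =
          (\<Sum>j\<le>k. b j * s ^ j * t ^ (k - j))^2 + (\<Sum>j\<le>k. c j * s ^ j * t ^ (k - j))^2"
        using binary_sos[OF f nn] unfolding h_def by blast
      define L where "L = (\<lambda>i (x::real^'n). x $ i - (u \<bullet> x) * u $ i)"
      define N where "N = (\<lambda>x. \<Sum>i\<in>UNIV. (L i x)^2)"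
      define E where "E = (\<lambda>b x. \<Sum>j\<le>k. if even j then b j * (N x)^(j div 2) * (u \<bullet> x)^(k-j) else 0)"
      define Od where "Od = (\<lambda>b x. \<Sum>j\<le>k. if odd j then b j * (N x)^(j div 2) * (u \<bullet> x)^(k-j) else 0)"
      have isL: "is_form 1 (L i)" for i
      proof -
        have "is_form 1 (\<lambda>x::real^'n. x $ i + (- u $ i) * (u \<bullet> x))"
          by (intro is_form_add is_form_coord is_form_cmul is_form_inner)
        then show ?thesis by (rule is_form_cong) (auto simp: L_def)
      qed
      have isN: "is_form 2 N"
      proof -
        have "is_form (2*1) (\<lambda>x. (L i x)^2)" for i by (rule is_form_pow[OF isL])
        then have "is_form 2 (\<lambda>x. \<Sum>i\<in>UNIV. (L i x)^2)" by (intro is_form_sum) auto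
        then show ?thesis by (simp add: N_def)
      qed
      have isE: "is_form k (E b')" for b'
        unfolding E_def
      proof (rule is_form_sum)
        fix j assume j: "j \<in> {..k}"
        show "is_form k (\<lambda>x. if even j then b' j * (N x)^(j div 2) * (u \<bullet> x)^(k-j) else 0)"
        proof (cases "even j")
          case True
          then have d: "k = (j div 2) * 2 + (k - j) * 1" using j by auto
          have "is_form k (\<lambda>x. b' j * (N x)^(j div 2) * (u \<bullet> x)^(k-j))"
            by (rule is_form_mult'[OF is_form_cmul[OF is_form_pow[OF isN]] is_form_pow[OF is_form_inner] d])
          then show ?thesis using True by simp
        next
          case False then show ?thesis by (simp add: is_form_zero)
        qed
      qed simp
      have isO: "is_form (k - 1) (Od b')" for b'
        unfolding Od_def
      proof (rule is_form_sum)
        fix j assume j: "j \<in> {..k}"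
        show "is_form (k - 1) (\<lambda>x. if odd j then b' j * (N x)^(j div 2) * (u \<bullet> x)^(k-j) else 0)"
        proof (cases "odd j")
          case True
          then have d: "k - 1 = (j div 2) * 2 + (k - j) * 1" using j by (auto elim!: oddE)
          have "is_form (k - 1) (\<lambda>x. b' j * (N x)^(j div 2) * (u \<bullet> x)^(k-j))"
            by (rule is_form_mult'[OF is_form_cmul[OF is_form_pow[OF isN]] is_form_pow[OF is_form_inner] d])
          then show ?thesis using True by simp
        next
          case False then show ?thesis by (simp add: is_form_zero)
        qed
      qed simp
      have isLO: "is_form k (\<lambda>x. L i x * Od b' x)" for i b'
      proof (cases "k = 0")
        case True
        then have "Od b' x = 0" for x by (simp add: Od_def)
        then show ?thesis using is_form_zero[of k] by (simp)
      next
        case False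
        then have d: "k = 1 + (k - 1)" by simp
        show ?thesis by (rule is_form_mult'[OF isL isO d])
      qed
      have Nn: "N x = (norm (x - (u \<bullet> x) *\<^sub>R u))^2" for x
        unfolding power2_norm_eq_inner by (simp add: N_def L_def inner_vec_def power2_eq_square)
      have ident: "f x = (E b x)^2 + (\<Sum>i\<in>UNIV. (L i x * Od b x)^2) + ((E c x)^2 + (\<Sum>i\<in>UNIV. (L i x * Od c x)^2))" for x
      proof -
        define r where "r = norm (x - (u \<bullet> x) *\<^sub>R u)"
        define t where "t = u \<bullet> x"
        have rN: "r^2 = N x" by (simp add: r_def Nn)
        have sp: "(\<Sum>j\<le>k. b' j * r^j * t^(k-j)) = E b' x + r * Od b' x" for b'
          unfolding eo_split[of b' r] E_def Od_def rN t_def ..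
        have sm: "(\<Sum>j\<le>k. b' j * (-r)^j * t^(k-j)) = E b' x - r * Od b' x" for b'
          unfolding eo_split[of b' "-r"] E_def Od_def t_def by (simp only: power2_minus rN)
        have k1: "f x = h r t" unfolding r_def t_def by (rule key)
        have f1: "f x = (E b x + r * Od b x)^2 + (E c x + r * Od c x)^2"
          using k1 bc sp by simp
        have k2: "f x = h (-r) t" using k1 heven[of r t] by simp
        have f2: "f x = (E b x - r * Od b x)^2 + (E c x - r * Od c x)^2"
          using k2 bc sm by simp
        have fxe: "f x = (E b x)^2 + r^2 * (Od b x)^2 + ((E c x)^2 + r^2 * (Od c x)^2)"
          using f1 f2 by (simp add: power2_eq_square algebra_simps)
        have sq: "r^2 * (Od b' x)^2 = (\<Sum>i\<in>UNIV. (L i x * Od b' x)^2)" for b'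
          unfolding rN N_def by (simp add: power_mult_distrib sum_distrib_right)
        show ?thesis using fxe by (simp only: sq)
      qed
      have "sosk k (\<lambda>x. (E b x)^2 + (\<Sum>i\<in>UNIV. (L i x * Od b x)^2) + ((E c x)^2 + (\<Sum>i\<in>UNIV. (L i x * Od c x)^2)))"
        by (intro sos_add sos_sq sos_sum isE isLO) auto
      then show ?thesis by (rule sos_cong) (simp add: ident)
    qed
  qed
  then show ?thesis unfolding sosk_def .
qed

end
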